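(* Let $\mathcal{I}=(I,w,v,m,k)$ be a CMK instance, $S\subseteq I$, and $\delta\in(0,0.1)$ with $\delta^{-1}\in\mathbb{N}$. Let $L=\{i\in S:\tilde w(i)\ge\delta\}$. Then for every $y\in([0,1]\cap\mathbb{Q})^I$ with $\mathrm{supp}(y)\subseteq S\setminus L$ there is a fractional solution $x$ such that $\mathrm{cover}(x)=y$ and $\|x\|\le 2\sum_{i\in I}y_i\,\tilde w(i)+1$.
   Context: A CMK instance is a tuple $\mathcal{I}=(I,w,v,m,k)$ with $I$ a finite item set, $w:I\to[0,1]$, $v:I\to\mathbb{R}_{\ge0}$, $m,k\in\mathbb{N}_{>0}$. The adjusted weight of $i\in I$ is $\tilde w(i)=w(i)+\frac1k$. A configuration is $C\subseteq I$ with $|C|\le k$ and $\sum_{i\in C}w(i)\le1$; $\mathcal{C}$ is the set of configurations and $\mathcal{C}(i)=\{C\in\mathcal{C}:i\in C\}$. A fractional solution is $x\in\mathbb{R}_{\ge0}^{\mathcal{C}}$; $\mathrm{cover}_i(x)=\sum_{C\in\mathcal{C}(i)}x_C$ and $\|x\|=\sum_{C}x_C$. $\mathrm{supp}(y)=\{i:y_i\ne0\}$. *)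

theory Defs
  imports Complex_Main
begin

definition cmk_instance :: "'a set \<Rightarrow> ('a \<Rightarrow> real) \<Rightarrow> ('a \<Rightarrow> real) \<Rightarrow> nat \<Rightarrow> nat \<Rightarrow> bool" where
  "cmk_instance I w v m k \<longleftrightarrow> finite I \<and> (\<forall>i\<in>I. 0 \<le> w i \<and> w i \<le> 1) \<and> (\<forall>i\<in>I. 0 \<le> v i)
     \<and> m > 0 \<and> k > 0"

definition adj_weight :: "('a \<Rightarrow> real) \<Rightarrow> nat \<Rightarrow> 'a \<Rightarrow> real" where
  "adj_weight w k i = w i + 1 / real k"

definition configs :: "'a set \<Rightarrow> ('a \<Rightarrow> real) \<Rightarrow> nat \<Rightarrow> 'a set set" where
  "configs I w k = {C. C \<subseteq> I \<and> card C \<le> k \<and> sum w C \<le> 1}"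

definition configs_of :: "'a set \<Rightarrow> ('a \<Rightarrow> real) \<Rightarrow> nat \<Rightarrow> 'a \<Rightarrow> 'a set set" where
  "configs_of I w k i = {C \<in> configs I w k. i \<in> C}"

text \<open>A fractional solution is a nonnegative vector indexed by configurations; we represent it
  as a function on sets whose values outside the configurations are irrelevant.\<close>
definition frac_solution :: "'a set \<Rightarrow> ('a \<Rightarrow> real) \<Rightarrow> nat \<Rightarrow> ('a set \<Rightarrow> real) \<Rightarrow> bool" where
  "frac_solution I w k x \<longleftrightarrow> (\<forall>C\<in>configs I w k. 0 \<le> x C)"

definition cover :: "'a set \<Rightarrow> ('a \<Rightarrow> real) \<Rightarrow> nat \<Rightarrow> ('a set \<Rightarrow> real) \<Rightarrow> 'a \<Rightarrow> real" where
  "cover I w k x i = (\<Sum>C\<in>configs_of I w k i. x C)"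

definition sol_norm :: "'a set \<Rightarrow> ('a \<Rightarrow> real) \<Rightarrow> nat \<Rightarrow> ('a set \<Rightarrow> real) \<Rightarrow> real" where
  "sol_norm I w k x = (\<Sum>C\<in>configs I w k. x C)"

end

theory Submission
  imports Defs
begin

lemma nextfit:
  fixes f :: "'a \<Rightarrow> real"
  assumes "finite A" "\<forall>i\<in>A. 0 \<le> f i \<and> f i \<le> 1/2"
  shows "\<exists>P. finite P \<and> \<Union>P = A \<and> (\<forall>G\<in>P. \<forall>H\<in>P. G \<noteq> H \<longrightarrow> G \<inter> H = {})
     \<and> (\<forall>G\<in>P. sum f G \<le> 1)
     \<and> (real (card P) \<le> 2 * sum f A \<or> (\<exists>G0\<in>P. 0 \<le> sum f G0 \<and> sum f G0 \<le> 1/2 \<and> real (card P) \<le> 2 * (sum f A - sum f G0) + 1))"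
  using assms
proof (induction A rule: finite_induct)
  case empty
  show ?case by (rule exI[of _ "{}"]) simp
next
  case (insert a A)
  then obtain P where fin: "finite P" and un: "\<Union>P = A"
    and dis: "\<forall>G\<in>P. \<forall>H\<in>P. G \<noteq> H \<longrightarrow> G \<inter> H = {}" and le1: "\<forall>G\<in>P. sum f G \<le> 1"
    and cs: "real (card P) \<le> 2 * sum f A \<or> (\<exists>G0\<in>P. 0 \<le> sum f G0 \<and> sum f G0 \<le> 1/2 \<and> real (card P) \<le> 2 * (sum f A - sum f G0) + 1)"
    by auto
  have fa: "0 \<le> f a" "f a \<le> 1/2" using insert.prems by auto
  have sA: "sum f (insert a A) = f a + sum f A" using insert.hyps by simp
  have aP: "\<forall>G\<in>P. a \<notin> G" using un insert.hyps by auto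
  have finG: "\<forall>G\<in>P. finite G" using un insert.hyps(1) by (metis Union_upper finite_subset)
  from cs show ?case
  proof
    assume c1: "real (card P) \<le> 2 * sum f A"
    let ?P = "insert {a} P"
    have "{a} \<notin> P" using aP by auto
    hence cP: "card ?P = card P + 1" using fin by simp
    have "\<exists>G0\<in>?P. 0 \<le> sum f G0 \<and> sum f G0 \<le> 1/2 \<and> real (card ?P) \<le> 2 * (sum f (insert a A) - sum f G0) + 1"
      by (rule bexI[of _ "{a}"]) (use fa cP sA c1 in auto)
    moreover have "\<forall>G\<in>?P. \<forall>H\<in>?P. G \<noteq> H \<longrightarrow> G \<inter> H = {}" using dis aP by auto
    moreover have "\<forall>G\<in>?P. sum f G \<le> 1" using le1 fa by auto
    ultimately show ?thesis using fin un by (intro exI[of _ ?P]) auto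
  next
    assume "\<exists>G0\<in>P. 0 \<le> sum f G0 \<and> sum f G0 \<le> 1/2 \<and> real (card P) \<le> 2 * (sum f A - sum f G0) + 1"
    then obtain G0 where G0: "G0 \<in> P" "0 \<le> sum f G0" "sum f G0 \<le> 1/2"
      "real (card P) \<le> 2 * (sum f A - sum f G0) + 1" by auto
    let ?G = "insert a G0"
    let ?P = "insert ?G (P - {G0})"
    have sG: "sum f ?G = f a + sum f G0" using finG G0(1) aP by simp
    have "?G \<notin> P - {G0}" using aP by auto
    hence "card ?P = card (P - {G0}) + 1" using fin by simp
    also have "\<dots> = card P" using fin G0(1) by (simp add: card_Diff_singleton) (metis One_nat_def Suc_pred card_gt_0_iff empty_iff)
    finally have cP: "card ?P = card P" .
    have un': "\<Union>?P = insert a A" using un G0(1) by auto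
    have dis': "\<forall>G\<in>?P. \<forall>H\<in>?P. G \<noteq> H \<longrightarrow> G \<inter> H = {}"
    proof (intro ballI impI)
      fix G H assume GH: "G \<in> ?P" "H \<in> ?P" "G \<noteq> H"
      show "G \<inter> H = {}"
      proof (cases "G = ?G")
        case True
        then have "H \<in> P" "H \<noteq> G0" using GH by auto
        then show ?thesis using True dis G0(1) aP by auto
      next
        case False
        then have G: "G \<in> P" "G \<noteq> G0" using GH by auto
        show ?thesis
        proof (cases "H = ?G")
          case True
          then show ?thesis using G dis G0(1) aP by auto
        next
          case False
          then have "H \<in> P" using GH by auto
          then show ?thesis using G GH dis by auto
        qed
      qed
    qed
    have le1': "\<forall>G\<in>?P. sum f G \<le> 1" using le1 sG fa G0 by auto
    show ?thesis
    proof (cases "sum f G0 + f a \<le> 1/2")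
      case True
      have "\<exists>G1\<in>?P. 0 \<le> sum f G1 \<and> sum f G1 \<le> 1/2 \<and> real (card ?P) \<le> 2 * (sum f (insert a A) - sum f G1) + 1"
        by (rule bexI[of _ ?G]) (use True sG cP sA G0 fa in auto)
      then show ?thesis using fin un' dis' le1' by (intro exI[of _ ?P]) auto
    next
      case False
      have "real (card ?P) \<le> 2 * sum f (insert a A)" using False cP sA G0 by auto
      then show ?thesis using fin un' dis' le1' by (intro exI[of _ ?P]) auto
    qed
  qed
qed


lemma main_gen:
  fixes I :: "'a set" and w y :: "'a \<Rightarrow> real" and k :: nat
  assumes fI: "finite I" and kp: "k > 0" and wp: "\<forall>i\<in>I. 0 \<le> w i"
  shows "card {i\<in>I. y i \<noteq> 0} = n \<Longrightarrow> \<forall>i\<in>I. 0 \<le> y i \<and> y i \<le> M \<Longrightarrow> 0 \<le> M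
    \<Longrightarrow> \<forall>i\<in>I. y i \<noteq> 0 \<longrightarrow> adj_weight w k i \<le> 1/2
    \<Longrightarrow> \<exists>x. frac_solution I w k x \<and> (\<forall>i\<in>I. cover I w k x i = y i)
           \<and> sol_norm I w k x \<le> 2 * (\<Sum>i\<in>I. y i * adj_weight w k i) + M"
proof (induction n arbitrary: y M rule: less_induct)
  case (less n)
  define A where "A = {i\<in>I. y i \<noteq> 0}"
  have finA: "finite A" using fI by (simp add: A_def)
  have AI: "A \<subseteq> I" by (auto simp: A_def)
  have finC: "finite (configs I w k)"
    by (rule finite_subset[of _ "Pow I"]) (auto simp: configs_def fI)
  have finCi: "\<And>i. finite (configs_of I w k i)"
    using finC by (simp add: configs_of_def)
  show ?case
  proof (cases "A = {}")
    case True
    hence y0: "\<forall>i\<in>I. y i = 0" by (auto simp: A_def)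
    show ?thesis
      apply (rule exI[of _ "\<lambda>C. 0"])
      using y0 less.prems by (simp add: frac_solution_def cover_def sol_norm_def)
  next
    case False
    define t where "t = Min (y ` A)"
    have tin: "t \<in> y ` A" using finA False by (simp add: t_def)
    then obtain j where j: "j \<in> A" "y j = t" by auto
    have tle: "\<forall>i\<in>A. t \<le> y i" using finA by (simp add: t_def)
    have tpos: "0 < t" using j less.prems(2) AI by (force simp: A_def)
    have tM: "t \<le> M" using j less.prems(2) AI by auto
    define y' where "y' = (\<lambda>i. if i \<in> A then y i - t else y i)"
    have sub: "{i\<in>I. y' i \<noteq> 0} \<subseteq> A - {j}" using j by (auto simp: y'_def A_def)
    have "card {i\<in>I. y' i \<noteq> 0} \<le> card (A - {j})" using sub finA by (simp add: card_mono)
    also have "\<dots> < card A" using finA j by (meson card_Diff1_less)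
    finally have lt: "card {i\<in>I. y' i \<noteq> 0} < n" using less.prems(1) by (simp add: A_def)
    have p2: "\<forall>i\<in>I. 0 \<le> y' i \<and> y' i \<le> M - t"
      using less.prems(2) tle tM by (auto simp: y'_def A_def)
    have p4: "\<forall>i\<in>I. y' i \<noteq> 0 \<longrightarrow> adj_weight w k i \<le> 1/2"
      using less.prems(4) sub by (auto simp: A_def)
    obtain x' where x'1: "frac_solution I w k x'" and x'2: "\<forall>i\<in>I. cover I w k x' i = y' i"
      and x'3: "sol_norm I w k x' \<le> 2 * (\<Sum>i\<in>I. y' i * adj_weight w k i) + (M - t)"
      using less.IH[OF lt refl p2 _ p4] tM by auto
    have awA: "\<forall>i\<in>A. 0 \<le> adj_weight w k i \<and> adj_weight w k i \<le> 1/2"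
      using less.prems(4) wp AI kp by (auto simp: A_def adj_weight_def)
    obtain P where fin: "finite P" and un: "\<Union>P = A"
      and dis: "\<forall>G\<in>P. \<forall>H\<in>P. G \<noteq> H \<longrightarrow> G \<inter> H = {}" and le1: "\<forall>G\<in>P. sum (adj_weight w k) G \<le> 1"
      and cs: "real (card P) \<le> 2 * sum (adj_weight w k) A \<or> (\<exists>G0\<in>P. 0 \<le> sum (adj_weight w k) G0 \<and> sum (adj_weight w k) G0 \<le> 1/2 \<and> real (card P) \<le> 2 * (sum (adj_weight w k) A - sum (adj_weight w k) G0) + 1)"
      using nextfit[OF finA awA] by blast
    have cardP: "real (card P) \<le> 2 * sum (adj_weight w k) A + 1" using cs by auto
    have PC: "P \<subseteq> configs I w k"
    proof
      fix G assume G: "G \<in> P"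
      have GA: "G \<subseteq> A" using G un by auto
      have finG: "finite G" using GA finA finite_subset by auto
      have "sum (adj_weight w k) G = sum w G + real (card G) / real k"
        by (simp add: adj_weight_def sum.distrib)
      hence eq: "sum w G + real (card G) / real k \<le> 1" using le1 G by metis
      have sw: "0 \<le> sum w G" using wp GA AI by (intro sum_nonneg) auto
      have "real (card G) / real k \<le> 1" using eq sw by linarith
      hence "card G \<le> k" using kp by (simp add: divide_le_eq)
      moreover have "sum w G \<le> 1" using eq kp by (smt (verit) divide_nonneg_nonneg of_nat_0_le_iff)
      ultimately show "G \<in> configs I w k" using GA AI by (auto simp: configs_def)
    qed
    define x where "x = (\<lambda>C. x' C + (if C \<in> P then t else 0))"
    have "frac_solution I w k x" using x'1 tpos by (auto simp: frac_solution_def x_def)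
    moreover have "\<forall>i\<in>I. cover I w k x i = y i"
    proof
      fix i assume iI: "i \<in> I"
      have "cover I w k x i = cover I w k x' i + (\<Sum>C\<in>configs_of I w k i. if C \<in> P then t else 0)"
        by (simp add: cover_def x_def sum.distrib)
      also have "(\<Sum>C\<in>configs_of I w k i. if C \<in> P then t else 0) = (\<Sum>C\<in>configs_of I w k i \<inter> P. t)"
        by (simp only: sum.inter_restrict[OF finCi])
      also have "configs_of I w k i \<inter> P = {G\<in>P. i \<in> G}" using PC by (auto simp: configs_of_def)
      also have "(\<Sum>C\<in>{G\<in>P. i \<in> G}. t) = (if i \<in> A then t else 0)"
      proof (cases "i \<in> A")
        case True
        then obtain G where G: "G \<in> P" "i \<in> G" using un by auto
        have E: "{G\<in>P. i \<in> G} = {G}" using G dis by auto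
        show ?thesis unfolding E using True by simp
      next
        case False
        then have E: "{G\<in>P. i \<in> G} = {}" using un by auto
        show ?thesis unfolding E using False by simp
      qed
      finally show "cover I w k x i = y i" using x'2 iI by (simp add: y'_def)
    qed
    moreover have "sol_norm I w k x \<le> 2 * (\<Sum>i\<in>I. y i * adj_weight w k i) + M"
    proof -
      have "sol_norm I w k x = sol_norm I w k x' + (\<Sum>C\<in>configs I w k. if C \<in> P then t else 0)"
        by (simp add: sol_norm_def x_def sum.distrib)
      also have "(\<Sum>C\<in>configs I w k. if C \<in> P then t else 0) = (\<Sum>C\<in>configs I w k \<inter> P. t)"
        by (simp only: sum.inter_restrict[OF finC])
      also have "configs I w k \<inter> P = P" using PC by auto
      finally have n1: "sol_norm I w k x = sol_norm I w k x' + t * real (card P)" by simp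
      have "(\<Sum>i\<in>I. y i * adj_weight w k i) = (\<Sum>i\<in>I. y' i * adj_weight w k i + (if i \<in> A then t * adj_weight w k i else 0))"
        by (rule sum.cong) (auto simp: y'_def algebra_simps)
      also have "\<dots> = (\<Sum>i\<in>I. y' i * adj_weight w k i) + (\<Sum>i\<in>I \<inter> A. t * adj_weight w k i)"
        by (simp add: sum.distrib sum.inter_restrict[OF fI])
      also have "I \<inter> A = A" using AI by auto
      finally have s1: "(\<Sum>i\<in>I. y i * adj_weight w k i) = (\<Sum>i\<in>I. y' i * adj_weight w k i) + t * sum (adj_weight w k) A"
        by (simp add: sum_distrib_left)
      have "t * real (card P) \<le> t * (2 * sum (adj_weight w k) A + 1)"
        using cardP tpos by (intro mult_left_mono) auto
      then show ?thesis using n1 s1 x'3 by (simp add: algebra_simps)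
    qed
    ultimately show ?thesis by blast
  qed
qed

theorem lemma4p1:
  fixes I S :: "'a set" and w v y :: "'a \<Rightarrow> real" and m k :: nat and \<delta> :: real
  assumes "cmk_instance I w v m k"
    and "S \<subseteq> I"
    and "0 < \<delta>" and "\<delta> < 0.1" and "\<exists>n::nat. 1 / \<delta> = real n"
    and "L = {i \<in> S. adj_weight w k i \<ge> \<delta>}"
    and "\<forall>i\<in>I. 0 \<le> y i \<and> y i \<le> 1 \<and> y i \<in> \<rat>"
    and "\<forall>i\<in>I. y i \<noteq> 0 \<longrightarrow> i \<in> S - L"
  shows "\<exists>x. frac_solution I w k x \<and> (\<forall>i\<in>I. cover I w k x i = y i)
           \<and> sol_norm I w k x \<le> 2 * (\<Sum>i\<in>I. y i * adj_weight w k i) + 1"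
proof -
  have c: "finite I" "k > 0" "\<forall>i\<in>I. 0 \<le> w i" using assms(1) by (auto simp: cmk_instance_def)
  have "\<forall>i\<in>I. y i \<noteq> 0 \<longrightarrow> adj_weight w k i \<le> 1/2"
    using assms(4,6,8) by auto
  moreover have "\<forall>i\<in>I. 0 \<le> y i \<and> y i \<le> 1" using assms(7) by auto
  ultimately show ?thesis using main_gen[OF c refl] by auto
qed

end
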